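(* Let $R$ be a commutative ring with $1\neq 0$, $S\subseteq R$ a multiplicatively closed subset, and $M$ an $S$-comultiplication $R$-module. If $N$ is an $S$-copure submodule of $M$, then $M/N$ is an $S$-comultiplication $R$-module.
   Context: All rings are commutative with $1\neq 0$ and all modules are unital. A multiplicatively closed subset (m.c.s.) $S$ of $R$ is a subset with $0\notin S$, $1\in S$, and $ss'\in S$ for all $s,s'\in S$. For an ideal $I$ and submodule $L$, $(L:_M I)=\{m\in M: Im\subseteq L\}$ and $(0:_M I)=\{m\in M: Im=0\}$. $M$ is an $S$-comultiplication module if for each submodule $N$ of $M$ there exist $s\in S$ and an ideal $I$ of $R$ with $s(0:_M I)\subseteq N\subseteq (0:_M I)$. A submodule $L$ of $M$ is $S$-copure if there exists $s\in S$ such that $s(L:_M I)\subseteq L+(0:_M I)$ for every ideal $I$ of $R$. *)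

theory Defs
  imports "HOL-Algebra.Module" "HOL-Algebra.AbelCoset" "HOL-Algebra.Ideal"
begin

definition mcs :: "('a, 'c) ring_scheme \<Rightarrow> 'a set \<Rightarrow> bool" where
  "mcs R S \<longleftrightarrow> S \<subseteq> carrier R \<and> \<zero>\<^bsub>R\<^esub> \<notin> S \<and> \<one>\<^bsub>R\<^esub> \<in> S \<and>
     (\<forall>s\<in>S. \<forall>t\<in>S. s \<otimes>\<^bsub>R\<^esub> t \<in> S)"

definition ann :: "('a, 'b, 'd) module_scheme \<Rightarrow> 'a set \<Rightarrow> 'b set" where
  "ann M I = {m \<in> carrier M. \<forall>a\<in>I. a \<odot>\<^bsub>M\<^esub> m = \<zero>\<^bsub>M\<^esub>}"

definition colon :: "('a, 'b, 'd) module_scheme \<Rightarrow> 'b set \<Rightarrow> 'a set \<Rightarrow> 'b set" where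
  "colon M L I = {m \<in> carrier M. \<forall>a\<in>I. a \<odot>\<^bsub>M\<^esub> m \<in> L}"

definition smult_set :: "('a, 'b, 'd) module_scheme \<Rightarrow> 'a \<Rightarrow> 'b set \<Rightarrow> 'b set" where
  "smult_set M s X = (\<lambda>x. s \<odot>\<^bsub>M\<^esub> x) ` X"

definition S_comultiplication ::
  "('a, 'c) ring_scheme \<Rightarrow> 'a set \<Rightarrow> ('a, 'b, 'd) module_scheme \<Rightarrow> bool" where
  "S_comultiplication R S M \<longleftrightarrow>
     (\<forall>N. submodule N R M \<longrightarrow>
        (\<exists>s\<in>S. \<exists>I. ideal I R \<and> smult_set M s (ann M I) \<subseteq> N \<and> N \<subseteq> ann M I))"

definition S_copure ::
  "('a, 'c) ring_scheme \<Rightarrow> 'a set \<Rightarrow> ('a, 'b, 'd) module_scheme \<Rightarrow> 'b set \<Rightarrow> bool" where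
  "S_copure R S M L \<longleftrightarrow>
     (\<exists>s\<in>S. \<forall>I. ideal I R \<longrightarrow> smult_set M s (colon M L I) \<subseteq> L <+>\<^bsub>M\<^esub> ann M I)"

text \<open>The multiplicative fields of the record are
  irrelevant for modules and are filled with dummies.\<close>
definition quot_module :: "('a, 'b, 'd) module_scheme \<Rightarrow> 'b set \<Rightarrow> ('a, 'b set) module" where
  "quot_module M N =
     \<lparr>carrier = a_rcosets\<^bsub>M\<^esub> N, monoid.mult = (\<lambda>X Y. N), one = N,
      zero = N, add = set_add M,
      smult = (\<lambda>r X. ((\<lambda>x. r \<odot>\<^bsub>M\<^esub> x) ` X) <+>\<^bsub>M\<^esub> N)\<rparr>"

end

theory Submission
  imports Defs
begin

context
  fixes R :: "('a, 'c) ring_scheme" and M :: "('a, 'b, 'd) module_scheme" and N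
  assumes mod: "module R M" and sub: "submodule N R M"
begin

interpretation M: module R M by (rule mod)

lemma qabs: "abelian_subgroup N M"
  by (rule abelian_subgroupI3[OF additive_subgroup.intro[OF submodule.axioms(1)[OF sub]]])
     (rule M.abelian_group_axioms)

interpretation NS: abelian_subgroup N M by (rule qabs)

lemma NsubM: "N \<subseteq> carrier M"
  using M.submoduleE(1)[OF sub] .

lemma q_carrier: "carrier (quot_module M N) = (\<lambda>x. N +>\<^bsub>M\<^esub> x) ` carrier M"
  unfolding quot_module_def A_RCOSETS_def RCOSETS_def a_r_coset_def by auto

lemma q_add: "x \<in> carrier M \<Longrightarrow> y \<in> carrier M \<Longrightarrow>
   (N +>\<^bsub>M\<^esub> x) \<oplus>\<^bsub>quot_module M N\<^esub> (N +>\<^bsub>M\<^esub> y) = N +>\<^bsub>M\<^esub> (x \<oplus>\<^bsub>M\<^esub> y)"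
  unfolding quot_module_def by (simp add: NS.a_rcos_sum)

lemma q_zero: "\<zero>\<^bsub>quot_module M N\<^esub> = N +>\<^bsub>M\<^esub> \<zero>\<^bsub>M\<^esub>"
  unfolding quot_module_def using NsubM by simp

lemma q_eqN: "x \<in> carrier M \<Longrightarrow> (N +>\<^bsub>M\<^esub> x = N) \<longleftrightarrow> x \<in> N"
  using NS.a_rcos_self NS.a_rcos_const by metis

lemma q_smult: "r \<in> carrier R \<Longrightarrow> x \<in> carrier M \<Longrightarrow>
   r \<odot>\<^bsub>quot_module M N\<^esub> (N +>\<^bsub>M\<^esub> x) = N +>\<^bsub>M\<^esub> (r \<odot>\<^bsub>M\<^esub> x)"
proof -
  assume r: "r \<in> carrier R" and x: "x \<in> carrier M"
  have "((\<lambda>y. r \<odot>\<^bsub>M\<^esub> y) ` (N +>\<^bsub>M\<^esub> x)) <+>\<^bsub>M\<^esub> N = N +>\<^bsub>M\<^esub> (r \<odot>\<^bsub>M\<^esub> x)"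
  proof
    show "((\<lambda>y. r \<odot>\<^bsub>M\<^esub> y) ` (N +>\<^bsub>M\<^esub> x)) <+>\<^bsub>M\<^esub> N \<subseteq> N +>\<^bsub>M\<^esub> (r \<odot>\<^bsub>M\<^esub> x)"
    proof
      fix z assume "z \<in> ((\<lambda>y. r \<odot>\<^bsub>M\<^esub> y) ` (N +>\<^bsub>M\<^esub> x)) <+>\<^bsub>M\<^esub> N"
      then obtain h k where h: "h \<in> N" and k: "k \<in> N" and z: "z = r \<odot>\<^bsub>M\<^esub> (h \<oplus>\<^bsub>M\<^esub> x) \<oplus>\<^bsub>M\<^esub> k"
        unfolding set_add_def' a_r_coset_def' by auto
      have hc: "h \<in> carrier M" "k \<in> carrier M" using h k NsubM by auto
      have "z = (r \<odot>\<^bsub>M\<^esub> h \<oplus>\<^bsub>M\<^esub> k) \<oplus>\<^bsub>M\<^esub> r \<odot>\<^bsub>M\<^esub> x"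
        using z hc x r by (simp add: M.smult_r_distr M.a_ac)
      moreover have "r \<odot>\<^bsub>M\<^esub> h \<oplus>\<^bsub>M\<^esub> k \<in> N"
        using h k r M.submoduleE(4,5)[OF sub] by blast
      ultimately show "z \<in> N +>\<^bsub>M\<^esub> (r \<odot>\<^bsub>M\<^esub> x)"
        unfolding a_r_coset_def' by blast
    qed
  next
    show "N +>\<^bsub>M\<^esub> (r \<odot>\<^bsub>M\<^esub> x) \<subseteq> ((\<lambda>y. r \<odot>\<^bsub>M\<^esub> y) ` (N +>\<^bsub>M\<^esub> x)) <+>\<^bsub>M\<^esub> N"
    proof
      fix z assume "z \<in> N +>\<^bsub>M\<^esub> (r \<odot>\<^bsub>M\<^esub> x)"
      then obtain h where h: "h \<in> N" and z: "z = h \<oplus>\<^bsub>M\<^esub> r \<odot>\<^bsub>M\<^esub> x"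
        unfolding a_r_coset_def' by auto
      have hc: "h \<in> carrier M" using h NsubM by auto
      have "z = r \<odot>\<^bsub>M\<^esub> (\<zero>\<^bsub>M\<^esub> \<oplus>\<^bsub>M\<^esub> x) \<oplus>\<^bsub>M\<^esub> h"
        using z hc x r by (simp add: M.a_ac)
      moreover have "\<zero>\<^bsub>M\<^esub> \<in> N" using M.submoduleE(2)[OF sub] 
        by (simp add: NS.zero_closed)
      ultimately show "z \<in> ((\<lambda>y. r \<odot>\<^bsub>M\<^esub> y) ` (N +>\<^bsub>M\<^esub> x)) <+>\<^bsub>M\<^esub> N"
        unfolding set_add_def' a_r_coset_def' using h by blast
    qed
  qed
  then show ?thesis unfolding quot_module_def by simp
qed


lemma q_module: "module R (quot_module M N)"
proof -
  let ?Q = "quot_module M N"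
  let ?p = "\<lambda>x. N +>\<^bsub>M\<^esub> x"
  have C: "\<And>X. X \<in> carrier ?Q \<Longrightarrow> \<exists>x\<in>carrier M. X = ?p x" using q_carrier by auto
  have I: "\<And>x. x \<in> carrier M \<Longrightarrow> ?p x \<in> carrier ?Q" using q_carrier by auto
  have ag: "abelian_group ?Q"
  proof (rule abelian_groupI)
    fix X Y assume "X \<in> carrier ?Q" "Y \<in> carrier ?Q"
    then obtain x y where "x \<in> carrier M" "y \<in> carrier M" "X = ?p x" "Y = ?p y" using C by metis
    then show "X \<oplus>\<^bsub>?Q\<^esub> Y \<in> carrier ?Q" "X \<oplus>\<^bsub>?Q\<^esub> Y = Y \<oplus>\<^bsub>?Q\<^esub> X"
      by (simp_all add: q_add I M.a_comm)
  next
    show "\<zero>\<^bsub>?Q\<^esub> \<in> carrier ?Q" by (simp add: q_zero I)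
  next
    fix X Y Z assume "X \<in> carrier ?Q" "Y \<in> carrier ?Q" "Z \<in> carrier ?Q"
    then obtain x y z where "x \<in> carrier M" "y \<in> carrier M" "z \<in> carrier M"
      "X = ?p x" "Y = ?p y" "Z = ?p z" using C by metis
    then show "X \<oplus>\<^bsub>?Q\<^esub> Y \<oplus>\<^bsub>?Q\<^esub> Z = X \<oplus>\<^bsub>?Q\<^esub> (Y \<oplus>\<^bsub>?Q\<^esub> Z)"
      by (simp add: q_add M.a_assoc)
  next
    fix X assume "X \<in> carrier ?Q"
    then obtain x where x: "x \<in> carrier M" "X = ?p x" using C by metis
    then show "\<zero>\<^bsub>?Q\<^esub> \<oplus>\<^bsub>?Q\<^esub> X = X" by (simp add: q_zero q_add)
    have "?p (\<ominus>\<^bsub>M\<^esub> x) \<oplus>\<^bsub>?Q\<^esub> X = \<zero>\<^bsub>?Q\<^esub>" using x by (simp add: q_zero q_add M.l_neg)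
    then show "\<exists>y\<in>carrier ?Q. y \<oplus>\<^bsub>?Q\<^esub> X = \<zero>\<^bsub>?Q\<^esub>" using I x by blast
  qed
  show ?thesis
  proof (rule moduleI[OF M.R.is_cring ag])
    fix a X assume a: "a \<in> carrier R" and "X \<in> carrier ?Q"
    then obtain x where x: "x \<in> carrier M" "X = ?p x" using C by metis
    then show "a \<odot>\<^bsub>?Q\<^esub> X \<in> carrier ?Q" using a by (simp add: q_smult I)
  next
    fix a b X assume a: "a \<in> carrier R" "b \<in> carrier R" and "X \<in> carrier ?Q"
    then obtain x where x: "x \<in> carrier M" "X = ?p x" using C by metis
    then show "(a \<oplus>\<^bsub>R\<^esub> b) \<odot>\<^bsub>?Q\<^esub> X = a \<odot>\<^bsub>?Q\<^esub> X \<oplus>\<^bsub>?Q\<^esub> b \<odot>\<^bsub>?Q\<^esub> X"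
      "(a \<otimes>\<^bsub>R\<^esub> b) \<odot>\<^bsub>?Q\<^esub> X = a \<odot>\<^bsub>?Q\<^esub> (b \<odot>\<^bsub>?Q\<^esub> X)"
      using a by (simp_all add: q_smult q_add M.smult_l_distr M.smult_assoc1)
  next
    fix a X Y assume a: "a \<in> carrier R" and "X \<in> carrier ?Q" "Y \<in> carrier ?Q"
    then obtain x y where "x \<in> carrier M" "y \<in> carrier M" "X = ?p x" "Y = ?p y" using C by metis
    then show "a \<odot>\<^bsub>?Q\<^esub> (X \<oplus>\<^bsub>?Q\<^esub> Y) = a \<odot>\<^bsub>?Q\<^esub> X \<oplus>\<^bsub>?Q\<^esub> a \<odot>\<^bsub>?Q\<^esub> Y"
      using a by (simp add: q_smult q_add M.smult_r_distr)
  next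
    fix X assume "X \<in> carrier ?Q"
    then obtain x where x: "x \<in> carrier M" "X = ?p x" using C by metis
    then show "\<one>\<^bsub>R\<^esub> \<odot>\<^bsub>?Q\<^esub> X = X" by (simp add: q_smult)
  qed
qed

end

theorem theorem3p4:
  fixes R :: "('a, 'c) ring_scheme" and M :: "('a, 'b, 'd) module_scheme"
  assumes "cring R" and "\<one>\<^bsub>R\<^esub> \<noteq> \<zero>\<^bsub>R\<^esub>"
    and "mcs R S"
    and "module R M"
    and "S_comultiplication R S M"
    and "submodule N R M"
    and "S_copure R S M N"
  shows "module R (quot_module M N) \<and> S_comultiplication R S (quot_module M N)"
proof -
  let ?Q = "quot_module M N"
  let ?p = "\<lambda>x. N +>\<^bsub>M\<^esub> x"
  note mod = assms(4) and sub = assms(6)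
  interpret M: module R M by (rule mod)
  have Qm: "module R ?Q" by (rule q_module[OF mod sub])
  interpret Q: module R ?Q by (rule Qm)
  have C: "\<And>X. X \<in> carrier ?Q \<Longrightarrow> \<exists>x\<in>carrier M. X = ?p x" using q_carrier[OF mod sub] by auto
  have Z: "\<zero>\<^bsub>?Q\<^esub> = N" by (simp add: quot_module_def)
  have NsM: "N \<subseteq> carrier M" by (rule NsubM[OF mod sub])
  have Icar: "a \<in> carrier R" if "ideal I R" "a \<in> I" for I a
    using additive_subgroup.a_subset[OF ideal.axioms(1)[OF that(1)]] that(2) by blast
  have "S_comultiplication R S ?Q"
    unfolding S_comultiplication_def
  proof (intro allI impI)
    fix K assume K: "submodule K R ?Q"
    have KQ: "K \<subseteq> carrier ?Q" using Q.submoduleE(1)[OF K] .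
    have K0: "N \<in> K"
      using additive_subgroup.zero_closed[OF additive_subgroup.intro[OF submodule.axioms(1)[OF K]]]
      by (simp add: quot_module_def)
    define L where "L = {x \<in> carrier M. ?p x \<in> K}"
    have NL: "N \<subseteq> L"
    proof
      fix n assume n: "n \<in> N"
      then have nc: "n \<in> carrier M" using NsM by auto
      have "?p n = N" using q_eqN[OF mod sub nc] n by simp
      then show "n \<in> L" unfolding L_def using nc K0 by simp
    qed
    have Ls: "submodule L R M"
    proof (rule M.submoduleI)
      show "L \<subseteq> carrier M" unfolding L_def by auto
      have "\<zero>\<^bsub>M\<^esub> \<in> N" using additive_subgroup.zero_closed[OF additive_subgroup.intro[OF submodule.axioms(1)[OF sub]]] by simp
      then show "\<zero>\<^bsub>M\<^esub> \<in> L" using NL by blast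
    next
      fix a assume a: "a \<in> L"
      then have ac: "a \<in> carrier M" and aK: "?p a \<in> K" unfolding L_def by auto
      have "(\<ominus>\<^bsub>R\<^esub> \<one>\<^bsub>R\<^esub>) \<odot>\<^bsub>?Q\<^esub> ?p a \<in> K" using Q.submoduleE(4)[OF K] aK by simp
      moreover have "(\<ominus>\<^bsub>R\<^esub> \<one>\<^bsub>R\<^esub>) \<odot>\<^bsub>?Q\<^esub> ?p a = ?p (\<ominus>\<^bsub>M\<^esub> a)"
        using ac by (simp add: q_smult[OF mod sub] M.smult_l_minus)
      ultimately show "\<ominus>\<^bsub>M\<^esub> a \<in> L" unfolding L_def using ac by simp
    next
      fix a b assume "a \<in> L" "b \<in> L"
      then show "a \<oplus>\<^bsub>M\<^esub> b \<in> L" unfolding L_def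
        using Q.submoduleE(5)[OF K] q_add[OF mod sub] by fastforce
    next
      fix a x assume "a \<in> carrier R" "x \<in> L"
      then show "a \<odot>\<^bsub>M\<^esub> x \<in> L" unfolding L_def
        using Q.submoduleE(4)[OF K] q_smult[OF mod sub] by fastforce
    qed
    obtain s I where s: "s \<in> S" and I: "ideal I R" and sI: "smult_set M s (ann M I) \<subseteq> L"
      and LI: "L \<subseteq> ann M I"
      using assms(5) Ls unfolding S_comultiplication_def by blast
    obtain t where t: "t \<in> S" and tI: "smult_set M t (colon M N I) \<subseteq> N <+>\<^bsub>M\<^esub> ann M I"
      using assms(7) I unfolding S_copure_def by blast
    have sc: "s \<in> carrier R" "t \<in> carrier R" using s t assms(3) unfolding mcs_def by auto
    have stS: "s \<otimes>\<^bsub>R\<^esub> t \<in> S" using s t assms(3) unfolding mcs_def by auto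
    have A: "K \<subseteq> ann ?Q I"
    proof
      fix X assume X: "X \<in> K"
      then obtain x where x: "x \<in> carrier M" "X = ?p x" using C KQ by blast
      then have "x \<in> ann M I" using X LI unfolding L_def by auto
      then have "\<forall>a\<in>I. a \<odot>\<^bsub>?Q\<^esub> X = \<zero>\<^bsub>?Q\<^esub>"
        using x Icar[OF I] by (auto simp: ann_def q_smult[OF mod sub] q_zero[OF mod sub])
      then show "X \<in> ann ?Q I" unfolding ann_def using X KQ by auto
    qed
    have B: "smult_set ?Q (s \<otimes>\<^bsub>R\<^esub> t) (ann ?Q I) \<subseteq> K"
    proof
      fix Y assume "Y \<in> smult_set ?Q (s \<otimes>\<^bsub>R\<^esub> t) (ann ?Q I)"
      then obtain X where X: "X \<in> ann ?Q I" and Y: "Y = (s \<otimes>\<^bsub>R\<^esub> t) \<odot>\<^bsub>?Q\<^esub> X"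
        unfolding smult_set_def by auto
      obtain x where x: "x \<in> carrier M" "X = ?p x" using C X unfolding ann_def by blast
      have "\<forall>a\<in>I. a \<odot>\<^bsub>M\<^esub> x \<in> N"
      proof
        fix a assume a: "a \<in> I"
        then have "a \<odot>\<^bsub>?Q\<^esub> X = \<zero>\<^bsub>?Q\<^esub>" using X unfolding ann_def by auto
        then have "?p (a \<odot>\<^bsub>M\<^esub> x) = N"
          using x Icar[OF I a] q_smult[OF mod sub, of a x] Z by simp
        then show "a \<odot>\<^bsub>M\<^esub> x \<in> N" using q_eqN[OF mod sub] x Icar[OF I a] by simp
      qed
      then have "x \<in> colon M N I" unfolding colon_def using x by auto
      then have "t \<odot>\<^bsub>M\<^esub> x \<in> N <+>\<^bsub>M\<^esub> ann M I" using tI unfolding smult_set_def by auto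
      then obtain n m where n: "n \<in> N" and m: "m \<in> ann M I" and tx: "t \<odot>\<^bsub>M\<^esub> x = n \<oplus>\<^bsub>M\<^esub> m"
        unfolding set_add_def' by auto
      have nc: "n \<in> carrier M" and mc: "m \<in> carrier M" using n NsM m unfolding ann_def by auto
      have "s \<odot>\<^bsub>M\<^esub> m \<in> L" using sI m unfolding smult_set_def by auto
      moreover have "s \<odot>\<^bsub>M\<^esub> n \<in> L" using NL M.submoduleE(4)[OF sub] n sc by blast
      ultimately have "s \<odot>\<^bsub>M\<^esub> n \<oplus>\<^bsub>M\<^esub> s \<odot>\<^bsub>M\<^esub> m \<in> L" using M.submoduleE(5)[OF Ls] by blast
      moreover have "(s \<otimes>\<^bsub>R\<^esub> t) \<odot>\<^bsub>M\<^esub> x = s \<odot>\<^bsub>M\<^esub> n \<oplus>\<^bsub>M\<^esub> s \<odot>\<^bsub>M\<^esub> m"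
        using sc x nc mc tx by (simp add: M.smult_assoc1 M.smult_r_distr)
      ultimately have "?p ((s \<otimes>\<^bsub>R\<^esub> t) \<odot>\<^bsub>M\<^esub> x) \<in> K" unfolding L_def by simp
      then show "Y \<in> K" using Y x sc by (simp add: q_smult[OF mod sub])
    qed
    show "\<exists>s\<in>S. \<exists>I. ideal I R \<and> smult_set ?Q s (ann ?Q I) \<subseteq> K \<and> K \<subseteq> ann ?Q I"
      using stS I A B by blast
  qed
  then show ?thesis using Qm by blast
qed

end
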